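(* Let $F\in SL(d,\mathbb{Z})$ be partially hyperbolic with invariant splitting $\mathbb{R}^d=S\oplus C\oplus U$. Then $F$ is Katznelson irreducible (i.e. $C\cap\mathbb{Z}^d=\{0\}$) if and only if there is no non-constant factor $\eta(x)\in\mathbb{Q}[x]$ of the characteristic polynomial of $F$ all of whose roots are eigenvalues of $F|_C$.
   Context: Partial hyperbolicity of $F$ with respect to the $F$-invariant linear splitting $S\oplus C\oplus U$: for some metric, $\|F|_S\|<1$, $m(F|_U)>1$, $\|F|_S\|<m(F|_C)$, $m(F|_U)>\|F|_C\|$, where $m$ denotes the conorm. *)

theory Defs
  imports "HOL-Analysis.Analysis" "HOL-Computational_Algebra.Polynomial"
begin

definition real_mat :: "int^'n^'n \<Rightarrow> real^'n^'n" where
  "real_mat F = (\<chi> i j. real_of_int (F $ i $ j))"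

definition int_lattice :: "(real^'n) set" where
  "int_lattice = range (\<lambda>z::int^'n. \<chi> i. real_of_int (z $ i))"

definition charpoly_rat :: "int^'n^'n \<Rightarrow> rat poly" where
  "charpoly_rat F = det (\<chi> i j. (if i = j then [:0, 1:] else 0) - [:rat_of_int (F $ i $ j):])"

text \<open>A metric on R^d: the norm induced by a positive definite symmetric matrix P
  (every inner product on R^d is of this form).\<close>
definition pos_def :: "real^'n^'n \<Rightarrow> bool" where
  "pos_def P \<longleftrightarrow> transpose P = P \<and> (\<forall>v. v \<noteq> 0 \<longrightarrow> v \<bullet> (P *v v) > 0)"

definition metric_norm :: "real^'n^'n \<Rightarrow> real^'n \<Rightarrow> real" where
  "metric_norm P v = sqrt (v \<bullet> (P *v v))"

definition norm_on :: "real^'n^'n \<Rightarrow> real^'n^'n \<Rightarrow> (real^'n) set \<Rightarrow> real" where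
  "norm_on P A V = Sup {metric_norm P (A *v v) | v. v \<in> V \<and> metric_norm P v = 1}"

definition conorm_on :: "real^'n^'n \<Rightarrow> real^'n^'n \<Rightarrow> (real^'n) set \<Rightarrow> real" where
  "conorm_on P A V = Inf {metric_norm P (A *v v) | v. v \<in> V \<and> metric_norm P v = 1}"

definition direct_sum3 :: "(real^'n) set \<Rightarrow> (real^'n) set \<Rightarrow> (real^'n) set \<Rightarrow> bool" where
  "direct_sum3 S C U \<longleftrightarrow> subspace S \<and> subspace C \<and> subspace U \<and>
     (\<forall>v. \<exists>!(s, c, u). s \<in> S \<and> c \<in> C \<and> u \<in> U \<and> v = s + c + u)"

definition invariant :: "real^'n^'n \<Rightarrow> (real^'n) set \<Rightarrow> bool" where
  "invariant A V \<longleftrightarrow> (\<forall>v\<in>V. A *v v \<in> V)"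

definition partially_hyperbolic ::
  "int^'n^'n \<Rightarrow> (real^'n) set \<Rightarrow> (real^'n) set \<Rightarrow> (real^'n) set \<Rightarrow> bool" where
  "partially_hyperbolic F S C U \<longleftrightarrow>
     direct_sum3 S C U \<and> S \<noteq> {0} \<and> U \<noteq> {0} \<and>
     invariant (real_mat F) S \<and> invariant (real_mat F) C \<and> invariant (real_mat F) U \<and>
     (\<exists>P. pos_def P \<and>
        norm_on P (real_mat F) S < 1 \<and>
        conorm_on P (real_mat F) U > 1 \<and>
        norm_on P (real_mat F) S < conorm_on P (real_mat F) C \<and>
        conorm_on P (real_mat F) U > norm_on P (real_mat F) C)"

text \<open>Complex eigenvalues of the restriction A|_V of a real linear map to an invariant
  real subspace V, i.e. eigenvalues of its complexification: A(v + i w) = mu(v + i w)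
  with v, w \<in> V not both zero.\<close>
definition eigenvalue_on :: "real^'n^'n \<Rightarrow> (real^'n) set \<Rightarrow> complex \<Rightarrow> bool" where
  "eigenvalue_on A V mu \<longleftrightarrow> (\<exists>v\<in>V. \<exists>w\<in>V. (v \<noteq> 0 \<or> w \<noteq> 0) \<and>
      A *v v = Re mu *\<^sub>R v - Im mu *\<^sub>R w \<and>
      A *v w = Im mu *\<^sub>R v + Re mu *\<^sub>R w)"

end

theory Submission
  imports Defs "HOL-Computational_Algebra.Polynomial_Factorial"
    "HOL-Computational_Algebra.Fundamental_Theorem_Algebra"
    "HOL-Computational_Algebra.Field_as_Ring" "HOL-Computational_Algebra.Euclidean_Algorithm"
begin

definition pev :: "complex poly \<Rightarrow> complex^'n^'n \<Rightarrow> complex^'n \<Rightarrow> complex^'n" where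
  "pev p A = fold_coeffs (\<lambda>a f x. a *s x + f (A *v x)) p (\<lambda>x. 0)"

lemma pev_0[simp]: "pev 0 A x = 0"
  by (simp add: pev_def)

lemma pev_pCons[simp]: "pev (pCons a p) A x = a *s x + pev p A (A *v x)"
  by (cases "p = 0 \<and> a = 0") (auto simp add: pev_def)

lemma mv_add: "(A::complex^'n^'n) *v (x + y) = A *v x + A *v y"
  by (simp add: matrix_vector_right_distrib)

lemma mv_smult: "(A::complex^'n^'n) *v (c *s x) = c *s (A *v x)"
  by (simp add: vec_eq_iff matrix_vector_mult_def sum_distrib_left algebra_simps)

lemma mv_zero: "(A::complex^'n^'n) *v 0 = 0"
  by (simp add: vec_eq_iff matrix_vector_mult_def)

lemma pev_add: "pev (p + q) A x = pev p A x + pev q A x"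
proof (induction p arbitrary: q x)
  case (pCons a p)
  show ?case
  proof (cases q)
    case (pCons b q')
    then show ?thesis by (simp add: pCons.IH vector_sadd_rdistrib add_ac)
  qed
qed simp

lemma pev_xadd: "pev p A (x + y) = pev p A x + pev p A y"
  by (induction p arbitrary: x y) (simp_all add: mv_add vector_add_ldistrib algebra_simps)

lemma pev_xsmult: "pev p A (c *s x) = c *s pev p A x"
  by (induction p arbitrary: x) (simp_all add: mv_smult vector_add_ldistrib algebra_simps)

lemma pev_x0[simp]: "pev p A 0 = 0"
  by (induction p) (simp_all add: mv_zero)

lemma pev_comm: "pev p A (A *v x) = A *v pev p A x"
  by (induction p arbitrary: x) (simp_all add: mv_add mv_smult mv_zero)

lemma pev_smult: "pev (smult c p) A x = c *s pev p A x"
  by (induction p arbitrary: x) (simp_all add: vector_add_ldistrib)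

lemma pev_mult: "pev (p * q) A x = pev p A (pev q A x)"
  by (induction p arbitrary: x) (simp_all add: pev_add pev_smult pev_comm)

lemma pev_const[simp]: "pev [:c:] A x = c *s x"
  by simp

lemma pev_eigen: "A *v x = z *s x \<Longrightarrow> pev p A x = poly p z *s x"
  by (induction p arbitrary: x) (simp_all add: pev_xsmult algebra_simps vector_sadd_rdistrib)

lemma pev_lin: "pev [:-z, 1:] A x = A *v x - z *s x"
  by simp

lemma vp_rat: "vector_space_pair (\<lambda>(r::rat) (z::complex). of_rat r * z) ((*) :: rat \<Rightarrow> rat \<Rightarrow> rat)"
  unfolding vector_space_pair_def vector_space_def
  by (simp add: distrib_left distrib_right of_rat_add of_rat_mult mult.assoc)

lemma exists_qfun:
  fixes c :: complex
  assumes "c \<noteq> 0"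
  shows "\<exists>\<phi>::complex \<Rightarrow> rat. (\<forall>x y. \<phi> (x + y) = \<phi> x + \<phi> y) \<and>
           (\<forall>r x. \<phi> (of_rat r * x) = r * \<phi> x) \<and> \<phi> c = 1"
proof -
  interpret vp: vector_space_pair "\<lambda>(r::rat) (z::complex). of_rat r * z" "(*) :: rat \<Rightarrow> rat \<Rightarrow> rat"
    by (rule vp_rat)
  have ind: "vp.vs1.independent {c}" using assms by (simp only: vp.vs1.dependent_single) simp
  define \<phi> where "\<phi> = vp.construct {c} (\<lambda>_. 1)"
  have lin: "Vector_Spaces.linear (\<lambda>(r::rat) (z::complex). of_rat r * z) (*) \<phi>"
    unfolding \<phi>_def by (rule vp.linear_construct[OF ind])
  have "\<phi> c = 1" unfolding \<phi>_def by (rule vp.construct_basis[OF ind]) simp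
  moreover have "(\<forall>x y. \<phi> (x + y) = \<phi> x + \<phi> y) \<and> (\<forall>r x. \<phi> (of_rat r * x) = r * \<phi> x)"
    using Vector_Spaces.linear_iff[THEN iffD1, OF lin] by (elim conjE) (intro conjI)
  ultimately show ?thesis by blast
qed

abbreviation Qf :: "real^'n^'n \<Rightarrow> real^'n \<Rightarrow> real" where
  "Qf P v \<equiv> v \<bullet> (P *v v)"

lemma Q_sym:
  fixes P :: "real^'n^'n"
  assumes "transpose P = P"
  shows "w \<bullet> (P *v v) = v \<bullet> (P *v w)"
proof -
  have "v \<bullet> (P *v w) = (v v* P) \<bullet> w" by (rule dot_lmul_matrix[symmetric])
  also have "v v* P = P *v v" by (metis assms transpose_matrix_vector)
  finally show ?thesis by (simp add: inner_commute)
qed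

lemma Q_scale: "Qf P (c *\<^sub>R v) = c^2 * Qf P v"
  by (simp add: matrix_vector_mult_scaleR power2_eq_square)

lemma Q_identity:
  fixes P :: "real^'n^'n"
  assumes "transpose P = P"
  shows "Qf P (a *\<^sub>R v - b *\<^sub>R w) + Qf P (b *\<^sub>R v + a *\<^sub>R w) = (a^2 + b^2) * (Qf P v + Qf P w)"
  using Q_sym[OF assms, of w v]
  by (simp add: matrix_vector_mult_diff_distrib matrix_vector_right_distrib matrix_vector_mult_scaleR
      inner_diff_left inner_diff_right inner_add_left inner_add_right power2_eq_square algebra_simps)

lemma pos_def_lower:
  assumes "pos_def (P::real^'n^'n)"
  shows "\<exists>c>0. \<forall>v. c * (norm v)^2 \<le> Qf P v"
proof -
  have cont: "continuous_on (sphere 0 1) (\<lambda>v::real^'n. Qf P v)"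
    by (intro continuous_intros linear_continuous_on matrix_vector_mul_linear bounded_linear_inner_right)
       (simp add: linear_linear matrix_vector_mul_linear)
  have ne: "sphere (0::real^'n) 1 \<noteq> {}" by simp
  obtain v0 where v0: "v0 \<in> sphere 0 1" "\<And>y. y \<in> sphere 0 1 \<Longrightarrow> Qf P v0 \<le> Qf P y"
    using continuous_attains_inf[OF compact_sphere ne cont] by blast
  have "v0 \<noteq> 0" using v0(1) by auto
  then have c0: "Qf P v0 > 0" using assms by (simp add: pos_def_def)
  show ?thesis
  proof (intro exI[of _ "Qf P v0"] conjI allI c0)
    fix v :: "real^'n"
    show "Qf P v0 * (norm v)^2 \<le> Qf P v"
    proof (cases "v = 0")
      case True then show ?thesis by simp
    next
      case False
      let ?u = "(1 / norm v) *\<^sub>R v"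
      have "?u \<in> sphere 0 1" using False by simp
      then have "Qf P v0 \<le> Qf P ?u" by (rule v0(2))
      also have "\<dots> = (1 / norm v)^2 * Qf P v" by (rule Q_scale)
      also have "\<dots> = Qf P v / (norm v)^2" by (simp add: power_divide)
      finally show ?thesis using False by (simp add: field_simps)
    qed
  qed
qed

lemma Q_nonneg: "pos_def P \<Longrightarrow> 0 \<le> Qf P v"
  by (cases "v = 0") (auto simp: pos_def_def intro: less_imp_le)

lemma bdd_X:
  fixes P A :: "real^'n^'n"
  assumes pd: "pos_def P"
  shows "bdd_above {metric_norm P (A *v v) | v. v \<in> V \<and> metric_norm P v = 1}"
proof -
  obtain c where c: "c > 0" "\<And>v. c * (norm v)^2 \<le> Qf P v" using pos_def_lower[OF pd] by blast
  define K where "K = sqrt (1 / c)"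
  have sub: "{metric_norm P (A *v v) | v. v \<in> V \<and> metric_norm P v = 1}
      \<subseteq> (\<lambda>v. metric_norm P (A *v v)) ` cball 0 K"
  proof safe
    fix v assume "v \<in> V" "metric_norm P v = 1"
    then have "Qf P v = 1" by (simp add: metric_norm_def)
    then have "c * (norm v)^2 \<le> 1" using c(2)[of v] by simp
    then have "(norm v)^2 \<le> 1 / c" using c(1) by (simp add: field_simps)
    then have "norm v \<le> K" unfolding K_def by (simp add: real_le_rsqrt)
    then show "metric_norm P (A *v v) \<in> (\<lambda>v. metric_norm P (A *v v)) ` cball 0 K" by auto
  qed
  have "continuous_on (cball 0 K) (\<lambda>v. metric_norm P (A *v v))"
    unfolding metric_norm_def
    by (intro continuous_intros linear_continuous_on) (simp_all add: linear_linear matrix_vector_mul_linear matrix_vector_mul_assoc)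
  then have "compact ((\<lambda>v. metric_norm P (A *v v)) ` cball 0 K)"
    by (intro compact_continuous_image compact_cball)
  then have "bdd_above ((\<lambda>v. metric_norm P (A *v v)) ` cball 0 K)"
    by (intro bounded_imp_bdd_above compact_imp_bounded)
  then show ?thesis using sub by (rule bdd_above_mono)
qed

lemma normalize_vec:
  fixes P :: "real^'n^'n"
  assumes pd: "pos_def P" and V: "subspace V" and v: "v \<in> V" "v \<noteq> 0"
  shows "\<exists>u t. u \<in> V \<and> t > 0 \<and> metric_norm P u = 1 \<and> Qf P v = t^2 \<and>
     metric_norm P (A *v u) = sqrt (Qf P (A *v v)) / t"
proof -
  define t where "t = sqrt (Qf P v)"
  have Qp: "Qf P v > 0" using pd v by (simp add: pos_def_def)
  then have t: "t > 0" "Qf P v = t^2" unfolding t_def by auto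
  define u where "u = (1 / t) *\<^sub>R v"
  have "u \<in> V" unfolding u_def using V v by (simp add: subspace_scale)
  moreover have "metric_norm P u = 1"
    unfolding metric_norm_def u_def Q_scale using t by (simp add: power_divide)
  moreover have "metric_norm P (A *v u) = sqrt (Qf P (A *v v)) / t"
    unfolding metric_norm_def u_def matrix_vector_mult_scaleR Q_scale using t
    by (simp add: power_divide real_sqrt_divide)
  ultimately show ?thesis using t by blast
qed

lemma norm_on_bound:
  fixes P A :: "real^'n^'n"
  assumes pd: "pos_def P" and V: "subspace V" and v: "v \<in> V" "v \<noteq> 0"
  shows "0 \<le> norm_on P A V \<and> Qf P (A *v v) \<le> (norm_on P A V)^2 * Qf P v"
proof -
  obtain u t where ut: "u \<in> V" "t > 0" "metric_norm P u = 1" "Qf P v = t^2"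
     "metric_norm P (A *v u) = sqrt (Qf P (A *v v)) / t"
    using normalize_vec[OF pd V v] by blast
  have "metric_norm P (A *v u) \<le> norm_on P A V"
    unfolding norm_on_def using ut(1,3) by (intro cSup_upper bdd_X[OF pd]) blast
  then have le: "sqrt (Qf P (A *v v)) \<le> norm_on P A V * t" using ut by (simp add: field_simps)
  have q0: "0 \<le> Qf P (A *v v)" by (rule Q_nonneg[OF pd])
  then have n0: "0 \<le> norm_on P A V" using le ut(2) by (meson order.trans real_sqrt_ge_zero zero_le_mult_iff linorder_not_le less_imp_le)
  have "Qf P (A *v v) = (sqrt (Qf P (A *v v)))^2" using q0 by simp
  also have "\<dots> \<le> (norm_on P A V * t)^2" using le q0 by (intro power_mono) auto
  finally show ?thesis using n0 ut(4) by (simp add: power_mult_distrib)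
qed

lemma conorm_on_bound:
  fixes P A :: "real^'n^'n"
  assumes pd: "pos_def P" and V: "subspace V" and v: "v \<in> V" "v \<noteq> 0"
  shows "0 \<le> conorm_on P A V \<and> (conorm_on P A V)^2 * Qf P v \<le> Qf P (A *v v)"
proof -
  obtain u t where ut: "u \<in> V" "t > 0" "metric_norm P u = 1" "Qf P v = t^2"
     "metric_norm P (A *v u) = sqrt (Qf P (A *v v)) / t"
    using normalize_vec[OF pd V v] by blast
  let ?X = "{metric_norm P (A *v v) | v. v \<in> V \<and> metric_norm P v = 1}"
  have mem: "metric_norm P (A *v u) \<in> ?X" using ut(1,3) by blast
  have lb: "\<And>x. x \<in> ?X \<Longrightarrow> 0 \<le> x" using Q_nonneg[OF pd] by (auto simp: metric_norm_def)
  have "conorm_on P A V \<le> metric_norm P (A *v u)"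
    unfolding conorm_on_def using mem lb by (intro cInf_lower) (auto simp: bdd_below_def)
  then have le: "conorm_on P A V * t \<le> sqrt (Qf P (A *v v))" using ut by (simp add: field_simps)
  have m0: "0 \<le> conorm_on P A V"
    unfolding conorm_on_def using mem lb by (intro cInf_greatest) auto
  have q0: "0 \<le> Qf P (A *v v)" by (rule Q_nonneg[OF pd])
  have "(conorm_on P A V * t)^2 \<le> (sqrt (Qf P (A *v v)))^2" using le m0 ut(2) by (intro power_mono) auto
  also have "\<dots> = Qf P (A *v v)" using q0 by simp
  finally show ?thesis using m0 ut(4) by (simp add: power_mult_distrib)
qed

definition cmat :: "int^'n^'n \<Rightarrow> complex^'n^'n" where "cmat F = (\<chi> i j. of_int (F$i$j))"
definition cvec :: "real^'n \<Rightarrow> complex^'n" where "cvec v = (\<chi> i. complex_of_real (v$i))"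
definition rpart :: "complex^'n \<Rightarrow> real^'n" where "rpart x = (\<chi> i. Re (x$i))"
definition ipart :: "complex^'n \<Rightarrow> real^'n" where "ipart x = (\<chi> i. Im (x$i))"
definition cpx :: "(real^'n) set \<Rightarrow> (complex^'n) set" where "cpx V = {x. rpart x \<in> V \<and> ipart x \<in> V}"

lemma cx_eqI: "rpart x = rpart y \<Longrightarrow> ipart x = ipart y \<Longrightarrow> x = y"
  by (simp add: rpart_def ipart_def vec_eq_iff complex_eq_iff)

lemma rpart_mv: "rpart (cmat F *v x) = real_mat F *v rpart x"
  by (simp add: rpart_def cmat_def real_mat_def vec_eq_iff matrix_vector_mult_def Re_sum)

lemma ipart_mv: "ipart (cmat F *v x) = real_mat F *v ipart x"
  by (simp add: ipart_def cmat_def real_mat_def vec_eq_iff matrix_vector_mult_def Im_sum)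

lemma rpart_add[simp]: "rpart (x + y) = rpart x + rpart y"
  by (simp add: rpart_def vec_eq_iff)
lemma ipart_add[simp]: "ipart (x + y) = ipart x + ipart y"
  by (simp add: ipart_def vec_eq_iff)
lemma rpart_diff[simp]: "rpart (x - y) = rpart x - rpart y"
  by (simp add: rpart_def vec_eq_iff)
lemma ipart_diff[simp]: "ipart (x - y) = ipart x - ipart y"
  by (simp add: ipart_def vec_eq_iff)
lemma rpart_0[simp]: "rpart 0 = 0"
  by (simp add: rpart_def vec_eq_iff)
lemma ipart_0[simp]: "ipart 0 = 0"
  by (simp add: ipart_def vec_eq_iff)
lemma rpart_smult: "rpart (c *s x) = Re c *\<^sub>R rpart x - Im c *\<^sub>R ipart x"
  by (simp add: rpart_def ipart_def vec_eq_iff)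
lemma ipart_smult: "ipart (c *s x) = Im c *\<^sub>R rpart x + Re c *\<^sub>R ipart x"
  by (simp add: rpart_def ipart_def vec_eq_iff)
lemma rpart_cvec[simp]: "rpart (cvec v) = v"
  by (simp add: rpart_def cvec_def vec_eq_iff)
lemma ipart_cvec[simp]: "ipart (cvec v) = 0"
  by (simp add: ipart_def cvec_def vec_eq_iff)

lemma cx_eq0: "x = 0 \<longleftrightarrow> rpart x = 0 \<and> ipart x = 0"
  using cx_eqI[of x 0] by auto

lemma cpx_add: "subspace V \<Longrightarrow> x \<in> cpx V \<Longrightarrow> y \<in> cpx V \<Longrightarrow> x + y \<in> cpx V"
  by (simp add: cpx_def subspace_add)
lemma cpx_smult: "subspace V \<Longrightarrow> x \<in> cpx V \<Longrightarrow> c *s x \<in> cpx V"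
  by (simp add: cpx_def rpart_smult ipart_smult subspace_add subspace_diff subspace_scale)
lemma cpx_0: "subspace V \<Longrightarrow> 0 \<in> cpx V"
  by (simp add: cpx_def subspace_0)
lemma cpx_mv: "invariant (real_mat F) V \<Longrightarrow> x \<in> cpx V \<Longrightarrow> cmat F *v x \<in> cpx V"
  by (simp add: cpx_def rpart_mv ipart_mv invariant_def)
lemma cpx_cvec: "v \<in> V \<Longrightarrow> subspace V \<Longrightarrow> cvec v \<in> cpx V"
  by (simp add: cpx_def subspace_0)

lemma eig_iff:
  "eigenvalue_on (real_mat F) V z \<longleftrightarrow> (\<exists>x\<in>cpx V. x \<noteq> 0 \<and> cmat F *v x = z *s x)"
proof
  assume "eigenvalue_on (real_mat F) V z"
  then obtain v w where vw: "v \<in> V" "w \<in> V" "v \<noteq> 0 \<or> w \<noteq> 0"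
    "real_mat F *v v = Re z *\<^sub>R v - Im z *\<^sub>R w" "real_mat F *v w = Im z *\<^sub>R v + Re z *\<^sub>R w"
    unfolding eigenvalue_on_def by blast
  define x where "x = (\<chi> i. Complex (v$i) (w$i))"
  have r: "rpart x = v" and i: "ipart x = w" by (simp_all add: x_def rpart_def ipart_def vec_eq_iff)
  show "\<exists>x\<in>cpx V. x \<noteq> 0 \<and> cmat F *v x = z *s x"
  proof (intro bexI[of _ x] conjI)
    show "x \<in> cpx V" using r i vw by (simp add: cpx_def)
    show "x \<noteq> 0" using r i vw cx_eq0 by auto
    show "cmat F *v x = z *s x"
      by (rule cx_eqI) (simp_all add: rpart_mv ipart_mv rpart_smult ipart_smult r i vw)
  qed
next
  assume "\<exists>x\<in>cpx V. x \<noteq> 0 \<and> cmat F *v x = z *s x"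
  then obtain x where x: "x \<in> cpx V" "x \<noteq> 0" "cmat F *v x = z *s x" by blast
  show "eigenvalue_on (real_mat F) V z"
    unfolding eigenvalue_on_def
  proof (intro bexI conjI)
    show "rpart x \<noteq> 0 \<or> ipart x \<noteq> 0" using x cx_eq0 by auto
    show "real_mat F *v rpart x = Re z *\<^sub>R rpart x - Im z *\<^sub>R ipart x"
      using arg_cong[OF x(3), of rpart] by (simp add: rpart_mv rpart_smult)
    show "real_mat F *v ipart x = Im z *\<^sub>R rpart x + Re z *\<^sub>R ipart x"
      using arg_cong[OF x(3), of ipart] by (simp add: ipart_mv ipart_smult)
  qed (use x in \<open>auto simp: cpx_def\<close>)
qed

lemma eig_Q:
  fixes P A :: "real^'n^'n"
  assumes pd: "pos_def P" and ev: "eigenvalue_on A V z"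
  shows "\<exists>v w. v \<in> V \<and> w \<in> V \<and> (v \<noteq> 0 \<or> w \<noteq> 0) \<and> Qf P v + Qf P w > 0 \<and>
     Qf P (A *v v) + Qf P (A *v w) = (cmod z)^2 * (Qf P v + Qf P w)"
proof -
  obtain v w where vw: "v \<in> V" "w \<in> V" "v \<noteq> 0 \<or> w \<noteq> 0"
    "A *v v = Re z *\<^sub>R v - Im z *\<^sub>R w" "A *v w = Im z *\<^sub>R v + Re z *\<^sub>R w"
    using ev unfolding eigenvalue_on_def by blast
  have "Qf P v + Qf P w > 0"
    using vw(3) Q_nonneg[OF pd, of v] Q_nonneg[OF pd, of w] pd
    by (auto simp: pos_def_def add_pos_nonneg add_nonneg_pos)
  moreover have "Qf P (A *v v) + Qf P (A *v w) = (cmod z)^2 * (Qf P v + Qf P w)"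
    unfolding vw(4,5) using Q_identity[of P "Re z" v "Im z" w] pd
    by (simp add: pos_def_def cmod_power2)
  ultimately show ?thesis using vw by blast
qed

lemma eig_le_norm:
  fixes P A :: "real^'n^'n"
  assumes pd: "pos_def P" and V: "subspace V" and ev: "eigenvalue_on A V z"
  shows "0 \<le> norm_on P A V \<and> (cmod z)^2 \<le> (norm_on P A V)^2"
proof -
  obtain v w where vw: "v \<in> V" "w \<in> V" "v \<noteq> 0 \<or> w \<noteq> 0" "Qf P v + Qf P w > 0"
     "Qf P (A *v v) + Qf P (A *v w) = (cmod z)^2 * (Qf P v + Qf P w)"
    using eig_Q[OF pd ev] by blast
  let ?N = "norm_on P A V"
  have b: "Qf P (A *v u) \<le> ?N^2 * Qf P u" if "u \<in> V" for u
    using norm_on_bound[OF pd V that] by (cases "u = 0") auto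
  have n0: "0 \<le> ?N" using vw(3) norm_on_bound[OF pd V vw(1)] norm_on_bound[OF pd V vw(2)] by auto
  have "(cmod z)^2 * (Qf P v + Qf P w) \<le> ?N^2 * (Qf P v + Qf P w)"
    using b[OF vw(1)] b[OF vw(2)] vw(5) by (simp add: distrib_left)
  then show ?thesis using vw(4) n0 by simp
qed

lemma eig_ge_conorm:
  fixes P A :: "real^'n^'n"
  assumes pd: "pos_def P" and V: "subspace V" and ev: "eigenvalue_on A V z"
  shows "0 \<le> conorm_on P A V \<and> (conorm_on P A V)^2 \<le> (cmod z)^2"
proof -
  obtain v w where vw: "v \<in> V" "w \<in> V" "v \<noteq> 0 \<or> w \<noteq> 0" "Qf P v + Qf P w > 0"
     "Qf P (A *v v) + Qf P (A *v w) = (cmod z)^2 * (Qf P v + Qf P w)"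
    using eig_Q[OF pd ev] by blast
  let ?N = "conorm_on P A V"
  have b: "?N^2 * Qf P u \<le> Qf P (A *v u)" if "u \<in> V" for u
    using conorm_on_bound[OF pd V that] by (cases "u = 0") auto
  have n0: "0 \<le> ?N" using vw(3) conorm_on_bound[OF pd V vw(1)] conorm_on_bound[OF pd V vw(2)] by auto
  have "?N^2 * (Qf P v + Qf P w) \<le> (cmod z)^2 * (Qf P v + Qf P w)"
    using b[OF vw(1)] b[OF vw(2)] vw(5) by (simp add: distrib_left)
  then show ?thesis using vw(4) n0 by simp
qed

lemma spec_disjoint:
  assumes ph: "partially_hyperbolic F S C U" and evC: "eigenvalue_on (real_mat F) C z"
  shows "\<not> eigenvalue_on (real_mat F) S z \<and> \<not> eigenvalue_on (real_mat F) U z"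
proof -
  obtain P where P: "pos_def P" "norm_on P (real_mat F) S < conorm_on P (real_mat F) C"
      "conorm_on P (real_mat F) U > norm_on P (real_mat F) C"
    using ph unfolding partially_hyperbolic_def by blast
  have sub: "subspace S" "subspace C" "subspace U"
    using ph unfolding partially_hyperbolic_def direct_sum3_def by auto
  have c1: "0 \<le> conorm_on P (real_mat F) C \<and> (conorm_on P (real_mat F) C)^2 \<le> (cmod z)^2"
    by (rule eig_ge_conorm[OF P(1) sub(2) evC])
  have c2: "0 \<le> norm_on P (real_mat F) C \<and> (cmod z)^2 \<le> (norm_on P (real_mat F) C)^2"
    by (rule eig_le_norm[OF P(1) sub(2) evC])
  show ?thesis
  proof
    show "\<not> eigenvalue_on (real_mat F) S z"
    proof
      assume e: "eigenvalue_on (real_mat F) S z"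
      have s: "0 \<le> norm_on P (real_mat F) S \<and> (cmod z)^2 \<le> (norm_on P (real_mat F) S)^2"
        by (rule eig_le_norm[OF P(1) sub(1) e])
      have "(norm_on P (real_mat F) S)^2 < (conorm_on P (real_mat F) C)^2"
        using s P(2) by (intro power_strict_mono) auto
      then show False using s c1 by linarith
    qed
    show "\<not> eigenvalue_on (real_mat F) U z"
    proof
      assume e: "eigenvalue_on (real_mat F) U z"
      have s: "0 \<le> conorm_on P (real_mat F) U \<and> (conorm_on P (real_mat F) U)^2 \<le> (cmod z)^2"
        by (rule eig_ge_conorm[OF P(1) sub(3) e])
      have "(norm_on P (real_mat F) C)^2 < (conorm_on P (real_mat F) U)^2"
        using c2 P(3) by (intro power_strict_mono) auto
      then show False using s c2 by linarith
    qed
  qed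
qed

definition qlin :: "(complex \<Rightarrow> rat) \<Rightarrow> bool" where
  "qlin \<phi> \<longleftrightarrow> (\<forall>x y. \<phi> (x + y) = \<phi> x + \<phi> y) \<and> (\<forall>r x. \<phi> (of_rat r * x) = r * \<phi> x)"

lemma qlin_add: "qlin \<phi> \<Longrightarrow> \<phi> (x + y) = \<phi> x + \<phi> y" by (simp add: qlin_def)
lemma qlin_0: "qlin \<phi> \<Longrightarrow> \<phi> 0 = 0" using qlin_add[of \<phi> 0 0] by simp
lemma qlin_sum: "qlin \<phi> \<Longrightarrow> \<phi> (\<Sum>i\<in>I. f i) = (\<Sum>i\<in>I. \<phi> (f i))"
  by (induction I rule: infinite_finite_induct) (simp_all add: qlin_0 qlin_add)
lemma qlin_ratmult: "qlin \<phi> \<Longrightarrow> a \<in> \<rat> \<Longrightarrow> \<phi> (a * x) = (THE r. a = of_rat r) * \<phi> x"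
  by (auto simp: qlin_def elim!: Rats_cases)
lemma qlin_ratmult': "qlin \<phi> \<Longrightarrow> \<phi> (of_rat r * x) = r * \<phi> x"
  by (simp add: qlin_def)
lemma qlin_ratmult'': "qlin \<phi> \<Longrightarrow> \<phi> (x * of_rat r) = r * \<phi> x"
  by (simp add: qlin_def mult.commute)

definition Phi :: "(complex \<Rightarrow> rat) \<Rightarrow> complex^'n \<Rightarrow> complex^'n" where
  "Phi \<phi> x = (\<chi> j. of_rat (\<phi> (x$j)))"

definition ratv :: "complex^'n \<Rightarrow> bool" where "ratv x \<longleftrightarrow> (\<forall>j. x$j \<in> \<rat>)"

lemma Phi_add: "qlin \<phi> \<Longrightarrow> Phi \<phi> (x + y) = Phi \<phi> x + Phi \<phi> y"
  by (simp add: Phi_def vec_eq_iff qlin_add of_rat_add)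
lemma Phi_0: "qlin \<phi> \<Longrightarrow> Phi \<phi> 0 = 0"
  by (simp add: Phi_def vec_eq_iff qlin_0)
lemma Phi_mv: "qlin \<phi> \<Longrightarrow> Phi \<phi> (cmat F *v x) = cmat F *v Phi \<phi> x"
proof -
  assume q: "qlin \<phi>"
  have "\<phi> (of_int k * y) = of_int k * \<phi> y" for k y
    using qlin_ratmult'[OF q, of "of_int k" y] by simp
  then show ?thesis using q
    by (simp add: Phi_def vec_eq_iff cmat_def matrix_vector_mult_def qlin_sum of_rat_sum of_rat_mult)
qed

lemma Phi_smult_rat: "qlin \<phi> \<Longrightarrow> Phi \<phi> (of_rat r *s x) = of_rat r *s Phi \<phi> x"
  by (simp add: Phi_def vec_eq_iff qlin_ratmult' of_rat_mult)

lemma Phi_pev_A: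
  assumes q: "qlin \<phi>" and p: "\<forall>i. coeff p i \<in> \<rat>"
  shows "Phi \<phi> (pev p (cmat F) x) = pev p (cmat F) (Phi \<phi> x)"
  using p
proof (induction p arbitrary: x)
  case 0 then show ?case by (simp add: Phi_0 q)
next
  case (pCons a p)
  have a: "a \<in> \<rat>" using pCons.prems[rule_format, of 0] by simp
  have "\<forall>i. coeff p i \<in> \<rat>" using pCons.prems[rule_format, of "Suc i" for i] by simp
  note IH = pCons.IH[OF this]
  from a obtain r where r: "a = of_rat r" by (auto elim: Rats_cases)
  show ?case by (simp add: Phi_add q IH r Phi_smult_rat Phi_mv)
qed

lemma ratv_mv: "ratv x \<Longrightarrow> ratv (cmat F *v x)"
  by (auto simp: ratv_def cmat_def matrix_vector_mult_def intro!: Rats_sum Rats_mult)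
lemma ratv_add: "ratv x \<Longrightarrow> ratv y \<Longrightarrow> ratv (x + y)"
  by (simp add: ratv_def)
lemma ratv_smult: "a \<in> \<rat> \<Longrightarrow> ratv x \<Longrightarrow> ratv (a *s x)"
  by (simp add: ratv_def)
lemma ratv_0: "ratv 0" by (simp add: ratv_def)

lemma ratv_pev: "\<forall>i. coeff p i \<in> \<rat> \<Longrightarrow> ratv x \<Longrightarrow> ratv (pev p (cmat F) x)"
proof (induction p arbitrary: x)
  case 0 then show ?case by (simp add: ratv_0)
next
  case (pCons a p)
  have a: "a \<in> \<rat>" using pCons.prems(1)[rule_format, of 0] by simp
  have "\<forall>i. coeff p i \<in> \<rat>" using pCons.prems(1)[rule_format, of "Suc i" for i] by simp
  then show ?case using pCons a by (simp add: ratv_add ratv_smult ratv_mv)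
qed

lemma Phi_pev_B:
  assumes q: "qlin \<phi>" and x: "ratv x"
  shows "Phi \<phi> (pev p (cmat F) x) = pev (map_poly (\<lambda>c. of_rat (\<phi> c)) p) (cmat F) x"
  using x
proof (induction p arbitrary: x)
  case 0 then show ?case by (simp add: Phi_0 q)
next
  case (pCons a p)
  have m: "map_poly (\<lambda>c. of_rat (\<phi> c)) (pCons a p) = pCons (of_rat (\<phi> a)) (map_poly (\<lambda>c. of_rat (\<phi> c)) p)"
    by (rule map_poly_pCons) (simp add: qlin_0 q)
  have s: "Phi \<phi> (a *s x) = of_rat (\<phi> a) *s x"
  proof -
    have "\<phi> (a * x$j) = \<phi> a * (THE r. x$j = of_rat r)" for j
    proof -
      from pCons.prems have "x$j \<in> \<rat>" by (simp add: ratv_def)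
      then obtain r where r: "x$j = of_rat r" by (auto elim: Rats_cases)
      show ?thesis using qlin_ratmult''[OF q, of a r] by (simp add: r mult.commute)
    qed
    moreover have "x$j = of_rat (THE r. x$j = of_rat r)" for j
    proof -
      from pCons.prems have "x$j \<in> \<rat>" by (simp add: ratv_def)
      then obtain r where r: "x$j = of_rat r" by (auto elim: Rats_cases)
      show ?thesis by (simp add: r)
    qed
    ultimately show ?thesis by (simp add: Phi_def vec_eq_iff of_rat_mult)
  qed
  show ?case using pCons.prems
    by (simp add: m Phi_add q s pCons.IH ratv_mv)
qed

abbreviation rc :: "rat poly \<Rightarrow> complex poly" where "rc p \<equiv> map_poly of_rat p"

lemma rc_add: "rc (p + q) = rc p + rc q"
  by (rule poly_eqI) (simp add: coeff_map_poly of_rat_add)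
lemma rc_mult: "rc (p * q) = rc p * rc q"
  by (rule poly_eqI) (simp add: coeff_map_poly coeff_mult of_rat_sum of_rat_mult)
lemma rc_diff: "rc (p - q) = rc p - rc q"
  by (rule poly_eqI) (simp add: coeff_map_poly of_rat_diff)
lemma rc_const: "rc [:c:] = [:of_rat c:]"
  by (simp add: map_poly_pCons)
lemma rc_one: "rc 1 = 1"
  by simp
lemma rc_coeff_rat: "\<forall>i. coeff (rc p) i \<in> \<rat>"
  by (simp add: coeff_map_poly)
lemma rc_degree: "degree (rc p) = degree p"
  by (rule degree_map_poly) simp
lemma rc_eq0: "rc p = 0 \<longleftrightarrow> p = 0"
  by (simp add: map_poly_eq_0_iff)

lemma hom_prod:
  assumes "h 1 = 1" "\<And>x y. h (x * y) = h x * h y"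
  shows "h (\<Prod>i\<in>I. f i) = (\<Prod>i\<in>I. h (f i))"
  by (induction I rule: infinite_finite_induct) (simp_all add: assms)

lemma hom_sum':
  assumes "h 0 = 0" "\<And>x y. h (x + y) = h x + h y"
  shows "h (\<Sum>i\<in>I. f i) = (\<Sum>i\<in>I. h (f i))"
  by (induction I rule: infinite_finite_induct) (simp_all add: assms)

lemma hom_det:
  fixes h :: "'a::comm_ring_1 \<Rightarrow> 'b::comm_ring_1"
  assumes h0: "h 0 = 0" and h1: "h 1 = 1" and ha: "\<And>x y. h (x + y) = h x + h y"
    and hm: "\<And>x y. h (x * y) = h x * h y"
  shows "h (det A) = det (\<chi> i j. h (A$i$j))"
proof -
  have hn: "h (- x) = - h x" for x
  proof -
    have "h x + h (-x) = 0" using ha[of x "-x"] h0 by simp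
    then show ?thesis by (metis neg_eq_iff_add_eq_0)
  qed
  have hs: "h (of_int (sign p)) = of_int (sign p)" for p :: "'n \<Rightarrow> 'n"
    by (simp add: sign_def h1 hn)
  show ?thesis
    unfolding det_def
    by (simp add: hom_sum'[of h, OF h0 ha] hm hs hom_prod[of h, OF h1 hm])
qed

lemma ev_hom:
  fixes z :: complex
  shows "poly (rc 0) z = 0" "poly (rc 1) z = 1"
    "poly (rc (x + y)) z = poly (rc x) z + poly (rc y) z"
    "poly (rc (x * y)) z = poly (rc x) z * poly (rc y) z"
  by (simp_all add: rc_add rc_mult)

lemma chi_root:
  fixes F :: "int^'n^'n"
  assumes y: "cmat F *v y = z *s y" "y \<noteq> 0"
  shows "poly (rc (charpoly_rat F)) z = 0"
proof -
  let ?h = "\<lambda>p. poly (rc p) z"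
  let ?M = "(\<chi> i j. (if i = j then [:0, 1:] else 0) - [:rat_of_int (F $ i $ j):]) :: rat poly^'n^'n"
  have "?h (det ?M) = det (\<chi> i j. ?h (?M$i$j))"
    by (rule hom_det) (simp_all add: rc_add rc_mult)
  also have "(\<chi> i j. ?h (?M$i$j)) = (\<chi> i j. (if i = j then z else 0) - of_int (F$i$j))"
    by (simp add: vec_eq_iff rc_diff rc_const map_poly_pCons)
  finally have e: "poly (rc (charpoly_rat F)) z = det (\<chi> i j. (if i = j then z else 0) - of_int (F$i$j))"
    unfolding charpoly_rat_def .
  let ?N = "(\<chi> i j. (if i = j then z else 0) - of_int (F$i$j)) :: complex^'n^'n"
  have d: "(\<Sum>j\<in>UNIV. y $ j * (if i = j then z else 0)) = z * y $ i" for i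
    by (subst sum.cong[OF refl, where h="\<lambda>j. if i = j then z * y$j else 0"]) auto
  have "?N *v y = z *s y - cmat F *v y"
    using d by (simp add: vec_eq_iff matrix_vector_mult_def cmat_def algebra_simps sum_subtractf
        if_distrib[of "\<lambda>t. t * _"] cong: if_cong)
  then have "?N *v y = 0" by (simp only: y(1) diff_self)
  then have "\<not> inj ((*v) ?N)"
  proof (intro notI)
    assume "?N *v y = 0" "inj ((*v) ?N)"
    then have "y = 0" using injD[of "(*v) ?N" y 0] by simp
    then show False using y(2) by simp
  qed
  then have "det (matrix ((*v) ?N)) = 0" using det_nz_iff_inj_gen[of "(*v) ?N"] by auto
  then show ?thesis using e by simp
qed

lemma pev_cpx:
  assumes V: "subspace V" "invariant (real_mat F) V" and x: "x \<in> cpx V"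
  shows "pev p (cmat F) x \<in> cpx V"
  using x
proof (induction p arbitrary: x)
  case 0 then show ?case by (simp add: cpx_0 V)
next
  case (pCons a p)
  then show ?case by (simp add: cpx_add cpx_smult cpx_mv V)
qed

lemma inj_lemma:
  assumes V: "subspace V" "invariant (real_mat F) V"
  shows "p \<noteq> 0 \<Longrightarrow> (\<forall>z. poly p z = 0 \<longrightarrow> \<not> eigenvalue_on (real_mat F) V z) \<Longrightarrow>
    y \<in> cpx V \<Longrightarrow> pev p (cmat F) y = 0 \<Longrightarrow> y = 0"
proof (induction "degree p" arbitrary: p y rule: less_induct)
  case less
  show ?case
  proof (cases "degree p = 0")
    case True
    then obtain c where c: "p = [:c:]" by (metis degree_eq_zeroE)
    then have "c \<noteq> 0" using less.prems(1) by simp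
    then show ?thesis using less.prems(4) c by (simp add: vec_eq_iff)
  next
    case False
    then obtain z where z: "poly p z = 0"
      using fundamental_theorem_of_algebra_alt[of p] by fastforce
    then obtain q where q: "p = [:-z, 1:] * q" using poly_eq_0_iff_dvd by (metis dvdE)
    have q0: "q \<noteq> 0" using q less.prems(1) by auto
    have dq: "degree q < degree p" using q0 unfolding q by (subst degree_mult_eq) auto
    define w where "w = pev q (cmat F) y"
    have wV: "w \<in> cpx V" unfolding w_def by (rule pev_cpx[OF V less.prems(3)])
    have "cmat F *v w - z *s w = 0"
      using less.prems(4) unfolding q pev_mult w_def by simp
    then have "cmat F *v w = z *s w" by simp
    then have "w = 0" using wV less.prems(2) z eig_iff by blast
    moreover have "\<forall>z. poly q z = 0 \<longrightarrow> \<not> eigenvalue_on (real_mat F) V z"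
      using less.prems(2) q by auto
    ultimately have "pev q (cmat F) y = 0" "\<forall>z. poly q z = 0 \<longrightarrow> \<not> eigenvalue_on (real_mat F) V z"
      using w_def by auto
    then show ?thesis using less.hyps[OF dq q0] less.prems(3) by blast
  qed
qed

lemma pev_monom: "pev (monom c k) A x = c *s ((*v) A ^^ k) x"
proof (induction k arbitrary: x)
  case 0 then show ?case by (simp add: monom_0)
next
  case (Suc k)
  then show ?case by (simp add: monom_Suc funpow_swap1)
qed

lemma pev_sum: "pev (\<Sum>i\<in>I. p i) A x = (\<Sum>i\<in>I. pev (p i) A x)"
  by (induction I rule: infinite_finite_induct) (simp_all add: pev_add)

lemma ds_unique0:
  fixes S C U :: "(real^'n) set"
  assumes ds: "direct_sum3 S C U" and a: "a \<in> S" "b \<in> C" "d \<in> U" "a + b + d = 0"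
  shows "a = 0 \<and> b = 0 \<and> d = 0"
proof -
  have sub: "subspace S" "subspace C" "subspace U" using ds by (auto simp: direct_sum3_def)
  from ds have "\<exists>!(s, c, u). s \<in> S \<and> c \<in> C \<and> u \<in> U \<and> (0::real^'n) = s + c + u"
    unfolding direct_sum3_def by blast
  then obtain t where t: "\<And>t'. (case t' of (s, c, u) \<Rightarrow> s \<in> S \<and> c \<in> C \<and> u \<in> U \<and> (0::real^'n) = s + c + u) \<Longrightarrow> t' = t"
    by (metis (no_types, lifting) ex1E)
  have "(a, b, d) = t" using a by (intro t) auto
  moreover have "(0, 0, 0) = t" using sub by (intro t) (auto simp: subspace_0)
  ultimately have "(a, b, d) = (0, 0, 0)" by simp
  then show ?thesis by simp
qed

lemma ofreal_smult: "complex_of_real c *s (y::complex^'n) = c *\<^sub>R y"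
proof -
  have "(complex_of_real c *s y)$i = (c *\<^sub>R y)$i" for i
    by (simp only: vector_smult_component vector_scaleR_component) (simp add: scaleR_conv_of_real)
  then show ?thesis by (simp add: vec_eq_iff)
qed

lemma ann_exists:
  fixes A :: "complex^'n^'n" and x :: "complex^'n"
  shows "\<exists>q. q \<noteq> 0 \<and> pev q A x = 0"
proof -
  define f where "f i = ((*v) A ^^ i) x" for i
  define D where "D = DIM(complex^'n)"
  show ?thesis
  proof (cases "inj_on f {0..D}")
    case False
    then obtain i j where ij: "i \<noteq> j" "f i = f j" by (auto simp: inj_on_def)
    define q where "q = monom (1::complex) i + monom (-1) j"
    have "coeff q i = 1" using ij by (simp add: q_def)
    then have "q \<noteq> 0" by auto
    moreover have "pev q A x = 0"
      by (simp add: q_def pev_add pev_monom f_def[symmetric] ij(2))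
    ultimately show ?thesis by blast
  next
    case True
    let ?T = "f ` {0..D}"
    have "card ?T = D + 1" using True by (simp add: card_image)
    then have "dependent ?T" by (intro dependent_biggerset) (simp add: D_def)
    then obtain t u where tu: "finite t" "t \<subseteq> ?T" "(\<Sum>v\<in>t. u v *\<^sub>R v) = 0" "\<exists>v\<in>t. u v \<noteq> 0"
      unfolding dependent_explicit by blast
    define c where "c v = (if v \<in> t then u v else 0)" for v
    define q where "q = (\<Sum>i\<in>{0..D}. monom (complex_of_real (c (f i))) i)"
    from tu(4) obtain v0 where v0: "v0 \<in> t" "u v0 \<noteq> 0" by blast
    then obtain i0 where i0: "i0 \<in> {0..D}" "v0 = f i0" using tu(2) by blast
    have "coeff q i0 = complex_of_real (c (f i0))"
      unfolding q_def coeff_sum coeff_monom using i0(1) by (simp add: sum.delta)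
    then have "coeff q i0 \<noteq> 0" using v0 i0 by (simp add: c_def)
    then have "q \<noteq> 0" by auto
    moreover have "pev q A x = 0"
    proof -
      have "pev q A x = (\<Sum>i\<in>{0..D}. c (f i) *\<^sub>R f i)"
        by (simp add: q_def pev_sum pev_monom f_def ofreal_smult)
      also have "\<dots> = (\<Sum>v\<in>?T. c v *\<^sub>R v)"
        using sum.reindex[OF True, of "\<lambda>v. c v *\<^sub>R v"] by simp
      also have "\<dots> = (\<Sum>v\<in>t. c v *\<^sub>R v)"
        using tu(2) by (intro sum.mono_neutral_right) (auto simp: c_def)
      also have "\<dots> = 0" using tu(3) by (simp add: c_def)
      finally show ?thesis .
    qed
    ultimately show ?thesis by blast
  qed
qed

lemma rat_scale:
  fixes v :: "real^'n"
  assumes "\<forall>j. v$j \<in> \<rat>"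
  shows "\<exists>D::int. D > 0 \<and> (\<forall>j. of_int D * v$j \<in> \<int>)"
proof -
  have "\<forall>j. \<exists>d::int. d > 0 \<and> of_int d * v$j \<in> \<int>"
  proof
    fix j
    from assms have "v$j \<in> \<rat>" by blast
    then obtain a b where ab: "b > 0" "v$j = of_int a / of_int b" by (auto elim: Rats_cases')
    then have "of_int b * v$j = of_int a" by simp
    then show "\<exists>d::int. d > 0 \<and> of_int d * v$j \<in> \<int>" using ab(1) by (intro exI[of _ b]) simp
  qed
  then obtain d where d: "\<And>j. d j > 0" "\<And>j. of_int (d j) * v$j \<in> \<int>" by metis
  define D where "D = (\<Prod>j\<in>UNIV. d j)"
  have "D > 0" unfolding D_def using d(1) by (simp add: prod_pos)
  moreover have "of_int D * v$j \<in> \<int>" for j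
  proof -
    have "D = d j * (\<Prod>k\<in>UNIV - {j}. d k)" unfolding D_def by (simp add: prod.remove)
    then have e: "of_int D * v$j = of_int (\<Prod>k\<in>UNIV - {j}. d k) * (of_int (d j) * v$j)"
      by (simp add: mult_ac)
    show ?thesis by (simp only: e) (intro Ints_mult Ints_of_int d(2))
  qed
  ultimately show ?thesis by blast
qed

lemma int_lattice_mem:
  fixes w :: "real^'n"
  assumes "\<forall>j. w$j \<in> \<int>"
  shows "w \<in> int_lattice"
proof -
  have "w = (\<lambda>z::int^'n. \<chi> i. real_of_int (z$i)) (\<chi> i. \<lfloor>w$i\<rfloor>)"
    using assms by (auto simp: vec_eq_iff elim!: Ints_cases)
  then show ?thesis unfolding int_lattice_def by (rule ssubst) (rule rangeI)
qed

lemma of_real_of_rat': "complex_of_real (real_of_rat r) = of_rat r"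
  by (cases r) (simp add: of_rat_rat of_real_divide)

lemma cvec_add: "cvec (a + b) = cvec a + cvec b"
  by (simp add: cvec_def vec_eq_iff)

lemma qfun_qlin:
  assumes "c \<noteq> 0"
  obtains \<phi> where "qlin \<phi>" "\<phi> c = 1"
  using exists_qfun[OF assms] unfolding qlin_def by blast

lemma ph_facts:
  assumes ph: "partially_hyperbolic F S C U"
  shows "subspace S" "subspace C" "subspace U" "direct_sum3 S C U"
    "invariant (real_mat F) S" "invariant (real_mat F) C" "invariant (real_mat F) U"
  using ph unfolding partially_hyperbolic_def direct_sum3_def by auto

lemma has_root:
  fixes p :: "complex poly"
  assumes "degree p > 0"
  obtains z where "poly p z = 0"
  using fundamental_theorem_of_algebra_alt[of p] assms by fastforce

lemma dir1:
  fixes F :: "int^'n^'n" and S C U :: "(real^'n) set"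
  assumes ph: "partially_hyperbolic F S C U" and deg: "degree \<eta> > 0"
    and roots: "\<forall>z. poly (rc \<eta>) z = 0 \<longrightarrow> eigenvalue_on (real_mat F) C z"
  shows "\<exists>w. w \<in> C \<and> w \<in> int_lattice \<and> w \<noteq> 0"
proof -
  note phf = ph_facts[OF ph]
  obtain z where z: "poly (rc \<eta>) z = 0" using has_root[of "rc \<eta>"] deg by (auto simp: rc_degree)
  then have "eigenvalue_on (real_mat F) C z" using roots by blast
  then obtain x where x: "x \<in> cpx C" "x \<noteq> 0" "cmat F *v x = z *s x" using eig_iff by blast
  have px: "pev (rc \<eta>) (cmat F) x = 0" using pev_eigen[OF x(3)] z by simp
  from x(2) obtain j where j: "x$j \<noteq> 0" by (auto simp: vec_eq_iff)
  obtain \<phi> where \<phi>: "qlin \<phi>" "\<phi> (x$j) = 1" using qfun_qlin[OF j] by blast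
  define ur where "ur = (\<chi> i. real_of_rat (\<phi> (x$i)))"
  have u: "Phi \<phi> x = cvec ur" by (simp add: Phi_def cvec_def ur_def vec_eq_iff of_real_of_rat')
  have pu: "pev (rc \<eta>) (cmat F) (cvec ur) = 0"
    using Phi_pev_A[OF \<phi>(1) rc_coeff_rat, of \<eta> F x] px u by (simp add: Phi_0 \<phi>(1))
  have ur0: "ur \<noteq> 0" using \<phi>(2) by (auto simp: ur_def vec_eq_iff intro!: exI[of _ j])
  obtain s c t where sct: "s \<in> S" "c \<in> C" "t \<in> U" "ur = s + c + t"
    using phf(4) unfolding direct_sum3_def by blast
  define A1 where "A1 = pev (rc \<eta>) (cmat F) (cvec s)"
  define A2 where "A2 = pev (rc \<eta>) (cmat F) (cvec c)"
  define A3 where "A3 = pev (rc \<eta>) (cmat F) (cvec t)"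
  have Ain: "A1 \<in> cpx S" "A2 \<in> cpx C" "A3 \<in> cpx U"
    unfolding A1_def A2_def A3_def using phf sct
    by (auto intro!: pev_cpx cpx_cvec)
  have sum0: "A1 + A2 + A3 = 0" using pu unfolding A1_def A2_def A3_def sct(4) cvec_add pev_xadd .
  have "rpart A1 = 0 \<and> rpart A2 = 0 \<and> rpart A3 = 0"
    using Ain sum0 by (intro ds_unique0[OF phf(4)]) (auto simp: cpx_def dest: arg_cong[of _ _ rpart])
  moreover have "ipart A1 = 0 \<and> ipart A2 = 0 \<and> ipart A3 = 0"
    using Ain sum0 by (intro ds_unique0[OF phf(4)]) (auto simp: cpx_def dest: arg_cong[of _ _ ipart])
  ultimately have A0: "A1 = 0" "A3 = 0" using cx_eq0 by auto
  have eta0: "rc \<eta> \<noteq> 0" using deg by (auto simp: rc_eq0)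
  have "cvec s = 0"
  proof (rule inj_lemma[OF phf(1) phf(5) eta0])
    show "\<forall>z. poly (rc \<eta>) z = 0 \<longrightarrow> \<not> eigenvalue_on (real_mat F) S z"
      using roots spec_disjoint[OF ph] by blast
  qed (use A0 A1_def phf sct in \<open>auto intro: cpx_cvec\<close>)
  then have s0: "s = 0" using rpart_cvec[of s] by simp
  have "cvec t = 0"
  proof (rule inj_lemma[OF phf(3) phf(7) eta0])
    show "\<forall>z. poly (rc \<eta>) z = 0 \<longrightarrow> \<not> eigenvalue_on (real_mat F) U z"
      using roots spec_disjoint[OF ph] by blast
  qed (use A0 A3_def phf sct in \<open>auto intro: cpx_cvec\<close>)
  then have t0: "t = 0" using rpart_cvec[of t] by simp
  have urC: "ur \<in> C" using sct s0 t0 by simp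
  have "\<forall>j. ur$j \<in> \<rat>" by (simp add: ur_def)
  then obtain D :: int where D: "D > 0" "\<forall>j. of_int D * ur$j \<in> \<int>" using rat_scale by blast
  define w where "w = of_int D *\<^sub>R ur"
  have "w \<in> C" unfolding w_def using urC phf(2) by (simp add: subspace_scale)
  moreover have "w \<noteq> 0" unfolding w_def using D(1) ur0 by simp
  moreover have "w \<in> int_lattice" using D(2) by (intro int_lattice_mem) (simp add: w_def)
  ultimately show ?thesis by blast
qed

lemma rc_map: "qlin \<phi> \<Longrightarrow> rc (map_poly \<phi> q) = map_poly (\<lambda>c. of_rat (\<phi> c)) q"
  by (simp add: map_poly_map_poly qlin_0 o_def)

lemma dir2:
  fixes F :: "int^'n^'n" and S C U :: "(real^'n) set"
  assumes ph: "partially_hyperbolic F S C U" and w: "w \<in> C" "w \<in> int_lattice" "w \<noteq> 0"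
  shows "\<exists>\<eta>. \<eta> dvd charpoly_rat F \<and> degree \<eta> > 0 \<and>
     (\<forall>z. poly (rc \<eta>) z = 0 \<longrightarrow> eigenvalue_on (real_mat F) C z)"
proof -
  note phf = ph_facts[OF ph]
  define cand where "cand k \<longleftrightarrow> (\<exists>p x. p \<noteq> 0 \<and> degree p = k \<and> ratv x \<and> x \<noteq> 0 \<and> x \<in> cpx C \<and>
      pev (rc p) (cmat F) x = 0)" for k
  define x0 where "x0 = cvec w"
  have x0: "ratv x0" "x0 \<noteq> 0" "x0 \<in> cpx C"
  proof -
    from w(2) obtain zz :: "int^'n" where "w = (\<chi> i. real_of_int (zz$i))" unfolding int_lattice_def by blast
    then show "ratv x0" by (simp add: x0_def ratv_def cvec_def)
    show "x0 \<noteq> 0" using w(3) rpart_cvec[of w] x0_def by force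
    show "x0 \<in> cpx C" using w(1) phf(2) by (simp add: x0_def cpx_cvec)
  qed
  obtain q where q: "q \<noteq> 0" "pev q (cmat F) x0 = 0" using ann_exists by blast
  obtain \<phi> where \<phi>: "qlin \<phi>" "\<phi> (lead_coeff q) = 1" using qfun_qlin[of "lead_coeff q"] q(1) by auto
  define p0 where "p0 = map_poly \<phi> q"
  have "coeff p0 (degree q) = 1" unfolding p0_def using \<phi> by (simp add: coeff_map_poly qlin_0)
  then have p00: "p0 \<noteq> 0" by auto
  have "pev (rc p0) (cmat F) x0 = 0"
    unfolding p0_def rc_map[OF \<phi>(1)] Phi_pev_B[OF \<phi>(1) x0(1), symmetric] q(2) by (simp add: Phi_0 \<phi>(1))
  then have "cand (degree p0)" unfolding cand_def using p00 x0 by blast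
  define k0 where "k0 = (LEAST k. cand k)"
  have "cand k0" unfolding k0_def by (rule LeastI) fact
  then obtain p x where px: "p \<noteq> 0" "degree p = k0" "ratv x" "x \<noteq> 0" "x \<in> cpx C" "pev (rc p) (cmat F) x = 0"
    unfolding cand_def by blast
  have minimal: False if "p' \<noteq> 0" "degree p' < degree p" "ratv x'" "x' \<noteq> 0" "x' \<in> cpx C"
      "pev (rc p') (cmat F) x' = 0" for p' x'
  proof -
    have "cand (degree p')" unfolding cand_def using that by blast
    then have "k0 \<le> degree p'" unfolding k0_def by (rule Least_le)
    then show False using that(2) px(2) by simp
  qed
  have degp: "degree p > 0"
  proof (rule ccontr)
    assume "\<not> degree p > 0"
    then obtain c where c: "p = [:c:]" by (metis degree_eq_zeroE gr0I)
    then have "c \<noteq> 0" using px(1) by simp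
    then show False using px(4,6) c by (simp add: rc_const vec_eq_iff)
  qed
  have roots: "eigenvalue_on (real_mat F) C z" if z: "poly (rc p) z = 0" for z
  proof -
    obtain q where q: "rc p = [:-z, 1:] * q" using z poly_eq_0_iff_dvd by (metis dvdE)
    have rp0: "rc p \<noteq> 0" using px(1) by (simp add: rc_eq0)
    have q0: "q \<noteq> 0" using q rp0 by auto
    have dq: "degree q < degree p"
      using q0 rc_degree[of p] unfolding q by (subst (asm) degree_mult_eq) auto
    define y where "y = pev q (cmat F) x"
    have y0: "y \<noteq> 0"
    proof
      assume y0: "y = 0"
      obtain \<psi> where \<psi>: "qlin \<psi>" "\<psi> (lead_coeff q) = 1" using qfun_qlin[of "lead_coeff q"] q0 by auto
      define p' where "p' = map_poly \<psi> q"
      have "coeff p' (degree q) = 1" unfolding p'_def using \<psi> by (simp add: coeff_map_poly qlin_0)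
      then have p'0: "p' \<noteq> 0" by auto
      have "degree p' \<le> degree q" unfolding p'_def by (rule map_poly_degree_leq)
      then have dp': "degree p' < degree p" using dq by simp
      have "pev (rc p') (cmat F) x = 0"
        unfolding p'_def rc_map[OF \<psi>(1)] Phi_pev_B[OF \<psi>(1) px(3), symmetric] y_def[symmetric] y0
        by (simp add: Phi_0 \<psi>(1))
      then show False using minimal[OF p'0 dp' px(3,4,5)] by blast
    qed
    have "y \<in> cpx C" unfolding y_def by (rule pev_cpx[OF phf(2) phf(6) px(5)])
    moreover have "cmat F *v y - z *s y = 0"
      using px(6) unfolding q pev_mult y_def by simp
    ultimately show ?thesis using y0 eig_iff by auto
  qed
  have dvd: "p dvd charpoly_rat F"
  proof -
    let ?X = "charpoly_rat F"
    define g where "g = gcd p ?X"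
    obtain h where h: "p = g * h" unfolding g_def by (metis dvdE gcd_dvd1)
    have g0: "g \<noteq> 0" "h \<noteq> 0" using h px(1) by auto
    have dph: "degree p = degree g + degree h" using h g0 by (simp add: degree_mult_eq)
    obtain z where z: "poly (rc p) z = 0" using has_root[of "rc p"] degp by (auto simp: rc_degree)
    obtain y where y: "y \<in> cpx C" "y \<noteq> 0" "cmat F *v y = z *s y" using roots[OF z] eig_iff by blast
    have zX: "poly (rc ?X) z = 0" by (rule chi_root[OF y(3) y(2)])
    consider "degree g = 0" | "degree h = 0" | "degree g > 0" "degree h > 0" by auto
    then show ?thesis
    proof cases
      case 1
      then obtain c where c: "g = [:c:]" by (metis degree_eq_zeroE)
      then have c0: "c \<noteq> 0" using g0 by simp
      have "fst (bezout_coefficients p ?X) * p + snd (bezout_coefficients p ?X) * ?X = g"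
        unfolding g_def by (rule bezout_coefficients_fst_snd)
      then have "poly (rc (fst (bezout_coefficients p ?X) * p + snd (bezout_coefficients p ?X) * ?X)) z
          = poly (rc g) z" by simp
      then have "of_rat c = (0::complex)" using z zX c by (simp add: rc_add rc_mult rc_const)
      then show ?thesis using c0 by simp
    next
      case 2
      then obtain c where c: "h = [:c:]" by (metis degree_eq_zeroE)
      then have c0: "c \<noteq> 0" using g0 by simp
      obtain k where k: "?X = g * k" unfolding g_def by (metis dvdE gcd_dvd2)
      have "?X = p * smult (1 / c) k" using c0 unfolding k h c by (simp add: mult_ac)
      then show ?thesis by (rule dvdI)
    next
      case 3
      define x' where "x' = pev (rc h) (cmat F) x"
      show ?thesis
      proof (cases "x' = 0")
        case True
        have "degree h < degree p" using dph 3 by simp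
        moreover have "pev (rc h) (cmat F) x = 0" using True x'_def by simp
        ultimately show ?thesis using minimal[OF g0(2) _ px(3,4,5)] by blast
      next
        case False
        have "degree g < degree p" using dph 3 by simp
        moreover have "ratv x'" unfolding x'_def by (rule ratv_pev[OF rc_coeff_rat px(3)])
        moreover have "x' \<in> cpx C" unfolding x'_def by (rule pev_cpx[OF phf(2) phf(6) px(5)])
        moreover have "pev (rc g) (cmat F) x' = 0"
          using px(6) unfolding x'_def h rc_mult pev_mult .
        ultimately show ?thesis using minimal[OF g0(1)] False by blast
      qed
    qed
  qed
  show ?thesis using dvd degp roots by blast
qed

theorem lemma3p1:
  fixes F :: "int^'n^'n" and S C U :: "(real^'n) set"
  assumes "det F = 1"
    and "partially_hyperbolic F S C U"
  shows "C \<inter> int_lattice = {0} \<longleftrightarrow>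
    \<not> (\<exists>\<eta> :: rat poly. \<eta> dvd charpoly_rat F \<and> degree \<eta> > 0 \<and>
          (\<forall>z::complex. poly (map_poly of_rat \<eta>) z = 0 \<longrightarrow> eigenvalue_on (real_mat F) C z))"
proof
  assume L: "C \<inter> int_lattice = {0}"
  show "\<not> (\<exists>\<eta> :: rat poly. \<eta> dvd charpoly_rat F \<and> degree \<eta> > 0 \<and>
          (\<forall>z::complex. poly (map_poly of_rat \<eta>) z = 0 \<longrightarrow> eigenvalue_on (real_mat F) C z))"
  proof
    assume "\<exists>\<eta> :: rat poly. \<eta> dvd charpoly_rat F \<and> degree \<eta> > 0 \<and>
          (\<forall>z::complex. poly (map_poly of_rat \<eta>) z = 0 \<longrightarrow> eigenvalue_on (real_mat F) C z)"
    then obtain \<eta> :: "rat poly" where e: "degree \<eta> > 0"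
      "\<forall>z::complex. poly (map_poly of_rat \<eta>) z = 0 \<longrightarrow> eigenvalue_on (real_mat F) C z" by blast
    obtain w where "w \<in> C" "w \<in> int_lattice" "w \<noteq> 0" using dir1[OF assms(2) e] by blast
    then show False using L by blast
  qed
next
  assume N: "\<not> (\<exists>\<eta> :: rat poly. \<eta> dvd charpoly_rat F \<and> degree \<eta> > 0 \<and>
          (\<forall>z::complex. poly (map_poly of_rat \<eta>) z = 0 \<longrightarrow> eigenvalue_on (real_mat F) C z))"
  have "w = 0" if "w \<in> C" "w \<in> int_lattice" for w
  proof (rule ccontr)
    assume "w \<noteq> 0"
    then show False using dir2[OF assms(2) that] N by blast
  qed
  moreover have "0 \<in> C" using ph_facts(2)[OF assms(2)] by (simp add: subspace_0)
  moreover have "(0::real^'n) \<in> int_lattice"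
  proof -
    have "(0::real^'n) = (\<lambda>z::int^'n. \<chi> i. real_of_int (z$i)) 0" by (simp add: vec_eq_iff)
    then show ?thesis unfolding int_lattice_def by (rule ssubst) (rule rangeI)
  qed
  ultimately show "C \<inter> int_lattice = {0}" by blast
qed

end
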